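(* Let $\mathcal{D}=(V,\Phi)$ be a finite directed graph (arcs $\Phi\subseteq V\times V$) with adjacency matrix $M\in\{0,1\}^{V\times V}$ ($M_{vw}=1$ iff $(v,w)\in\Phi$). Let $\boldsymbol{\alpha}(t),\boldsymbol{\beta}(t)\in[0,+\infty)^V$ ($t\ge0$) be vector sequences such that $\boldsymbol{\alpha}(t)$ is non-decreasing in every component and $\boldsymbol{\beta}(t)$ is convergent, and let $\mathbf{r},\mathbf{s}\in(0,+\infty)^V$ with $r_v=s_v^{-1}$ for all $v\in V$. Set $W_{vw}=r_vM_{vw}s_w$. Define $\boldsymbol{\omega}(t),\boldsymbol{\eta}(t)\in\mathbb{R}^V$ by $\boldsymbol{\omega}(0)=\boldsymbol{\eta}(0)=\mathbf{1}$ and, for all $v\in V$, $t\ge0$, $$\omega_v(t+1)=\frac{1}{1+\alpha_v(t)+\sum_{w}W_{vw}(1-\omega_w(t))},\qquad \eta_v(t+1)=1+\beta_v(t)+\sum_w M_{vw}\,\omega_w(t)\,\eta_w(t).$$ If $\mathcal{D}$ is acyclic, then $\boldsymbol{\eta}(t)$ is convergent and $\boldsymbol{\omega}(t)$ is non-increasing in every component and convergent. Moreover, for each $v\in V$, $\lim_{t\to\infty}\omega_v(t)<1$ if and only if there exists $w$ reachable from $v$ such that the sequence $\alpha_w(t)$ is not identically zero.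
   Context: A path from $v$ to $w$ of length $l\ge0$ is a list $(u_0,\dots,u_l)$ with $u_0=v$, $u_l=w$ and $(u_{i-1},u_i)\in\Phi$; $w$ is reachable from $v$ if such a path of some length $l\ge0$ exists (so $v$ is reachable from itself). A strongly connected component is a maximal induced subdigraph in which every node is reachable from every other; it is trivial if it is a single node without a self-loop. $\mathcal{D}$ is acyclic if all its strongly connected components are trivial. *)

theory Defs
  imports Complex_Main
begin

definition adj :: "('a \<times> 'a) set \<Rightarrow> 'a \<Rightarrow> 'a \<Rightarrow> real" where
  "adj Phi v w = (if (v, w) \<in> Phi then 1 else 0)"

definition wmat :: "('a \<times> 'a) set \<Rightarrow> ('a \<Rightarrow> real) \<Rightarrow> ('a \<Rightarrow> real) \<Rightarrow> 'a \<Rightarrow> 'a \<Rightarrow> real" where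
  "wmat Phi r s v w = r v * adj Phi v w * s w"

primrec omega_seq :: "'a set \<Rightarrow> ('a \<times> 'a) set \<Rightarrow> (nat \<Rightarrow> 'a \<Rightarrow> real) \<Rightarrow>
    ('a \<Rightarrow> real) \<Rightarrow> ('a \<Rightarrow> real) \<Rightarrow> nat \<Rightarrow> 'a \<Rightarrow> real" where
  "omega_seq V Phi \<alpha> r s 0 = (\<lambda>v. 1)"
| "omega_seq V Phi \<alpha> r s (Suc t) = (\<lambda>v. 1 / (1 + \<alpha> t v +
      (\<Sum>w\<in>V. wmat Phi r s v w * (1 - omega_seq V Phi \<alpha> r s t w))))"

primrec eta_seq :: "'a set \<Rightarrow> ('a \<times> 'a) set \<Rightarrow> (nat \<Rightarrow> 'a \<Rightarrow> real) \<Rightarrow> (nat \<Rightarrow> 'a \<Rightarrow> real) \<Rightarrow>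
    ('a \<Rightarrow> real) \<Rightarrow> ('a \<Rightarrow> real) \<Rightarrow> nat \<Rightarrow> 'a \<Rightarrow> real" where
  "eta_seq V Phi \<alpha> \<beta> r s 0 = (\<lambda>v. 1)"
| "eta_seq V Phi \<alpha> \<beta> r s (Suc t) = (\<lambda>v. 1 + \<beta> t v +
      (\<Sum>w\<in>V. adj Phi v w * omega_seq V Phi \<alpha> r s t w * eta_seq V Phi \<alpha> \<beta> r s t w))"

end

theory Submission
  imports Defs
begin

lemma wmat_nonneg:
  assumes "\<forall>v\<in>V. r v > 0 \<and> s v > 0" "v \<in> V" "w \<in> V"
  shows "wmat Phi r s v w \<ge> 0"
  using assms by (auto simp: wmat_def adj_def intro!: mult_nonneg_nonneg less_imp_le)

lemma om_bounds:
  assumes "\<forall>t. \<forall>v\<in>V. \<alpha> t v \<ge> 0" "\<forall>v\<in>V. r v > 0 \<and> s v > 0"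
  shows "\<forall>v\<in>V. 0 < omega_seq V Phi \<alpha> r s t v \<and> omega_seq V Phi \<alpha> r s t v \<le> 1"
proof (induction t)
  case 0 then show ?case by simp
next
  case (Suc t)
  show ?case
  proof
    fix v assume v: "v \<in> V"
    let ?S = "\<Sum>w\<in>V. wmat Phi r s v w * (1 - omega_seq V Phi \<alpha> r s t w)"
    have "?S \<ge> 0"
      by (rule sum_nonneg) (use Suc v wmat_nonneg[OF assms(2)] in auto)
    moreover have "\<alpha> t v \<ge> 0" using assms v by auto
    ultimately have "1 + \<alpha> t v + ?S \<ge> 1" by linarith
    then show "0 < omega_seq V Phi \<alpha> r s (Suc t) v \<and> omega_seq V Phi \<alpha> r s (Suc t) v \<le> 1"
      by simp
  qed
qed

lemma om_mono:
  assumes "\<forall>t. \<forall>v\<in>V. \<alpha> t v \<ge> 0" "\<forall>v\<in>V. r v > 0 \<and> s v > 0"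
    "\<forall>v\<in>V. incseq (\<lambda>t. \<alpha> t v)"
  shows "\<forall>v\<in>V. omega_seq V Phi \<alpha> r s (Suc t) v \<le> omega_seq V Phi \<alpha> r s t v"
proof (induction t)
  case 0 then show ?case using om_bounds[OF assms(1,2), of Phi 1] by auto
next
  case (Suc t)
  show ?case
  proof
    fix v assume v: "v \<in> V"
    let ?S1 = "\<Sum>w\<in>V. wmat Phi r s v w * (1 - omega_seq V Phi \<alpha> r s t w)"
    let ?S2 = "\<Sum>w\<in>V. wmat Phi r s v w * (1 - omega_seq V Phi \<alpha> r s (Suc t) w)"
    have S1: "?S1 \<ge> 0"
      by (rule sum_nonneg) (use om_bounds[OF assms(1,2)] v wmat_nonneg[OF assms(2)] in auto)
    have "?S1 \<le> ?S2"
      by (rule sum_mono) (use Suc v wmat_nonneg[OF assms(2)] in \<open>auto intro!: mult_left_mono\<close>)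
    moreover have "\<alpha> t v \<le> \<alpha> (Suc t) v" using assms(3) v by (auto simp: incseq_Suc_iff)
    moreover have "\<alpha> t v \<ge> 0" using assms v by auto
    ultimately have "1 / (1 + \<alpha> (Suc t) v + ?S2) \<le> 1 / (1 + \<alpha> t v + ?S1)"
      using S1 by (intro frac_le) auto
    then show "omega_seq V Phi \<alpha> r s (Suc (Suc t)) v \<le> omega_seq V Phi \<alpha> r s (Suc t) v"
      by simp
  qed
qed

lemma om_one:
  assumes "\<forall>w. (v, w) \<in> Phi\<^sup>* \<longrightarrow> (\<forall>t. \<alpha> t w = 0)"
  shows "\<forall>x. (v, x) \<in> Phi\<^sup>* \<longrightarrow> omega_seq V Phi \<alpha> r s t x = 1"
proof (induction t)
  case 0 then show ?case by simp
next
  case (Suc t)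
  show ?case
  proof (intro allI impI)
    fix x assume x: "(v, x) \<in> Phi\<^sup>*"
    have "(\<Sum>w\<in>V. wmat Phi r s x w * (1 - omega_seq V Phi \<alpha> r s t w)) = 0"
    proof (rule sum.neutral, rule ballI)
      fix w assume "w \<in> V"
      show "wmat Phi r s x w * (1 - omega_seq V Phi \<alpha> r s t w) = 0"
      proof (cases "(x, w) \<in> Phi")
        case True
        then have "(v, w) \<in> Phi\<^sup>*" using x by auto
        then show ?thesis using Suc by auto
      qed (auto simp: wmat_def adj_def)
    qed
    then show "omega_seq V Phi \<alpha> r s (Suc t) x = 1" using assms x by simp
  qed
qed

lemma om_lt1:
  assumes "\<forall>t. \<forall>v\<in>V. \<alpha> t v \<ge> 0" "\<forall>v\<in>V. r v > 0 \<and> s v > 0"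
    "finite V" "Phi \<subseteq> V \<times> V"
    and "(v, w) \<in> Phi\<^sup>*" "w \<in> V" "\<alpha> t0 w \<noteq> 0"
  shows "\<exists>t. omega_seq V Phi \<alpha> r s t v < 1"
  using assms(5,6)
proof (induction rule: converse_rtrancl_induct)
  case base
  let ?S = "\<Sum>x\<in>V. wmat Phi r s w x * (1 - omega_seq V Phi \<alpha> r s t0 x)"
  have "?S \<ge> 0"
    by (rule sum_nonneg) (use om_bounds[OF assms(1,2)] base wmat_nonneg[OF assms(2)] in auto)
  moreover have "\<alpha> t0 w \<ge> 0" using assms(1) base by auto
  then have "\<alpha> t0 w > 0" using assms(7) by linarith
  ultimately have "1 + \<alpha> t0 w + ?S > 1" by linarith
  then have "omega_seq V Phi \<alpha> r s (Suc t0) w < 1" by simp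
  then show ?case by blast
next
  case (step u x)
  then obtain t1 where t1: "omega_seq V Phi \<alpha> r s t1 x < 1" by blast
  have uV: "u \<in> V" "x \<in> V" using step(1) assms(4) by auto
  let ?f = "\<lambda>y. wmat Phi r s u y * (1 - omega_seq V Phi \<alpha> r s t1 y)"
  have pos: "?f x > 0" using t1 step(1) uV assms(2) by (auto simp: wmat_def adj_def)
  have "?f x \<le> (\<Sum>y\<in>V. ?f y)"
    by (rule member_le_sum) (use om_bounds[OF assms(1,2)] uV wmat_nonneg[OF assms(2)] assms(3) in auto)
  moreover have "\<alpha> t1 u \<ge> 0" using assms(1) uV by auto
  ultimately have "1 + \<alpha> t1 u + (\<Sum>y\<in>V. ?f y) > 1" using pos by linarith
  then have "omega_seq V Phi \<alpha> r s (Suc t1) u < 1" by simp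
  then show ?case by blast
qed

theorem lemma3:
  fixes V :: "'a set" and Phi :: "('a \<times> 'a) set"
    and \<alpha> \<beta> :: "nat \<Rightarrow> 'a \<Rightarrow> real" and r s :: "'a \<Rightarrow> real"
  assumes "finite V" and "Phi \<subseteq> V \<times> V"
    and "\<forall>t. \<forall>v\<in>V. \<alpha> t v \<ge> 0" and "\<forall>t. \<forall>v\<in>V. \<beta> t v \<ge> 0"
    and "\<forall>v\<in>V. incseq (\<lambda>t. \<alpha> t v)"
    and "\<forall>v\<in>V. convergent (\<lambda>t. \<beta> t v)"
    and "\<forall>v\<in>V. r v > 0 \<and> s v > 0 \<and> r v = 1 / s v"
    and "acyclic Phi"
  shows "(\<forall>v\<in>V. convergent (\<lambda>t. eta_seq V Phi \<alpha> \<beta> r s t v))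
       \<and> (\<forall>v\<in>V. decseq (\<lambda>t. omega_seq V Phi \<alpha> r s t v)
                 \<and> convergent (\<lambda>t. omega_seq V Phi \<alpha> r s t v))
       \<and> (\<forall>v\<in>V. lim (\<lambda>t. omega_seq V Phi \<alpha> r s t v) < 1 \<longleftrightarrow>
                 (\<exists>w. (v, w) \<in> Phi\<^sup>* \<and> (\<exists>t. \<alpha> t w \<noteq> 0)))"
proof -
  have rs: "\<forall>v\<in>V. r v > 0 \<and> s v > 0" using assms(7) by auto
  note bnd = om_bounds[OF assms(3) rs]
  have dec: "decseq (\<lambda>t. omega_seq V Phi \<alpha> r s t v)" if "v \<in> V" for v
    by (rule decseq_SucI) (use om_mono[OF assms(3) rs assms(5)] that in auto)
  have conv: "(\<lambda>t. omega_seq V Phi \<alpha> r s t v) \<longlonglongrightarrow> lim (\<lambda>t. omega_seq V Phi \<alpha> r s t v)"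
    if vV: "v \<in> V" for v
  proof -
    have lb: "\<forall>i. 0 \<le> omega_seq V Phi \<alpha> r s i v" using bnd vV by (simp add: less_imp_le)
    obtain L where "(\<lambda>t. omega_seq V Phi \<alpha> r s t v) \<longlonglongrightarrow> L"
      using decseq_convergent[OF dec[OF vV] lb] by blast
    then show ?thesis by (metis limI)
  qed
  have omc: "convergent (\<lambda>t. omega_seq V Phi \<alpha> r s t v)" if "v \<in> V" for v
    using conv[OF that] convergent_def by blast
  have lim_iff: "lim (\<lambda>t. omega_seq V Phi \<alpha> r s t v) < 1 \<longleftrightarrow> (\<exists>t. omega_seq V Phi \<alpha> r s t v < 1)"
    if v: "v \<in> V" for v
  proof
    assume l: "lim (\<lambda>t. omega_seq V Phi \<alpha> r s t v) < 1"
    show "\<exists>t. omega_seq V Phi \<alpha> r s t v < 1"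
    proof (rule ccontr)
      assume "\<not> ?thesis"
      then have "\<forall>t. omega_seq V Phi \<alpha> r s t v = 1" using bnd v by (meson not_less order_antisym)
      then have "(\<lambda>t. omega_seq V Phi \<alpha> r s t v) = (\<lambda>t. 1)" by auto
      then show False using l by (simp add: limI)
    qed
  next
    assume "\<exists>t. omega_seq V Phi \<alpha> r s t v < 1"
    then obtain t where "omega_seq V Phi \<alpha> r s t v < 1" by blast
    moreover have "lim (\<lambda>t. omega_seq V Phi \<alpha> r s t v) \<le> omega_seq V Phi \<alpha> r s t v"
      by (rule decseq_ge[OF dec[OF v] conv[OF v]])
    ultimately show "lim (\<lambda>t. omega_seq V Phi \<alpha> r s t v) < 1" by linarith
  qed
  have char: "(\<exists>t. omega_seq V Phi \<alpha> r s t v < 1) \<longleftrightarrow> (\<exists>w. (v, w) \<in> Phi\<^sup>* \<and> (\<exists>t. \<alpha> t w \<noteq> 0))"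
    if v: "v \<in> V" for v
  proof
    assume "\<exists>t. omega_seq V Phi \<alpha> r s t v < 1"
    show "\<exists>w. (v, w) \<in> Phi\<^sup>* \<and> (\<exists>t. \<alpha> t w \<noteq> 0)"
    proof (rule ccontr)
      assume "\<not> (\<exists>w. (v, w) \<in> Phi\<^sup>* \<and> (\<exists>t. \<alpha> t w \<noteq> 0))"
      then have "\<forall>w. (v, w) \<in> Phi\<^sup>* \<longrightarrow> (\<forall>t. \<alpha> t w = 0)" by blast
      from om_one[OF this, of V r s] have "\<forall>t. omega_seq V Phi \<alpha> r s t v = 1" by blast
      then show False using \<open>\<exists>t. omega_seq V Phi \<alpha> r s t v < 1\<close> by auto
    qed
  next
    assume "\<exists>w. (v, w) \<in> Phi\<^sup>* \<and> (\<exists>t. \<alpha> t w \<noteq> 0)"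
    then obtain w t0 where w: "(v, w) \<in> Phi\<^sup>*" "\<alpha> t0 w \<noteq> 0" by blast
    have "w \<in> V" using w(1) v assms(2)
      by (induction rule: rtrancl_induct) auto
    then show "\<exists>t. omega_seq V Phi \<alpha> r s t v < 1"
      using om_lt1[OF assms(3) rs assms(1,2) w(1) _ w(2)] by blast
  qed
  have fin: "finite Phi" using assms(1,2) finite_subset by blast
  have wf: "wf (Phi\<inverse>)" using finite_acyclic_wf_converse[OF fin assms(8)] .
  have eta: "v \<in> V \<longrightarrow> convergent (\<lambda>t. eta_seq V Phi \<alpha> \<beta> r s t v)" for v
  proof (induction v rule: wf_induct[OF wf])
    case (1 v)
    show ?case
    proof
      assume v: "v \<in> V"
      have trm: "convergent (\<lambda>t. adj Phi v w * omega_seq V Phi \<alpha> r s t w * eta_seq V Phi \<alpha> \<beta> r s t w)"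
        if w: "w \<in> V" for w
      proof (cases "(v, w) \<in> Phi")
        case True
        then have "convergent (\<lambda>t. eta_seq V Phi \<alpha> \<beta> r s t w)" using 1 w by auto
        then show ?thesis using omc[OF w]
          by (intro convergent_mult convergent_const) auto
      next
        case False
        then show ?thesis by (simp add: adj_def convergent_const)
      qed
      have "convergent (\<lambda>t. 1 + \<beta> t v + (\<Sum>w\<in>V. adj Phi v w * omega_seq V Phi \<alpha> r s t w * eta_seq V Phi \<alpha> \<beta> r s t w))"
        using assms(6) v trm
        by (intro convergent_add convergent_sum convergent_const) auto
      then have "convergent (\<lambda>t. eta_seq V Phi \<alpha> \<beta> r s (Suc t) v)" by simp
      then show "convergent (\<lambda>t. eta_seq V Phi \<alpha> \<beta> r s t v)"
        using convergent_Suc_iff[of "\<lambda>t. eta_seq V Phi \<alpha> \<beta> r s t v"] by simp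
    qed
  qed
  have A: "\<forall>v\<in>V. convergent (\<lambda>t. eta_seq V Phi \<alpha> \<beta> r s t v)" using eta by blast
  have B: "\<forall>v\<in>V. decseq (\<lambda>t. omega_seq V Phi \<alpha> r s t v)
                 \<and> convergent (\<lambda>t. omega_seq V Phi \<alpha> r s t v)" using dec omc by blast
  have C: "\<forall>v\<in>V. lim (\<lambda>t. omega_seq V Phi \<alpha> r s t v) < 1 \<longleftrightarrow>
                 (\<exists>w. (v, w) \<in> Phi\<^sup>* \<and> (\<exists>t. \<alpha> t w \<noteq> 0))"
  proof
    fix v assume "v \<in> V"
    then show "lim (\<lambda>t. omega_seq V Phi \<alpha> r s t v) < 1 \<longleftrightarrow>
                 (\<exists>w. (v, w) \<in> Phi\<^sup>* \<and> (\<exists>t. \<alpha> t w \<noteq> 0))"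
      using lim_iff char by simp
  qed
  show ?thesis using A B C by (intro conjI)
qed

end
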